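(* Let $p>n$, let $\Theta\in\mathbb{R}^{p\times p}$ be symmetric positive definite with eigendecomposition $\Theta=PD^2P^T$ ($P$ orthogonal, $D$ diagonal), and let $X\in\mathbb{R}^{(n+1)\times p}$ have i.i.d. rows distributed as $\mathcal{N}_p(\mu,\Theta)$. Let $\Pi=I_{n+1}-(n+1)^{-1}\mathbf{1}\mathbf{1}^T$ and let $\Pi X=U\Lambda V^T$ be the singular value decomposition of $\Pi X$ with $\Lambda\in\mathbb{R}^{n\times n}$ diagonal (singular values in nonincreasing order), $U\in\mathbb{R}^{(n+1)\times n}$ and $V\in\mathbb{R}^{p\times n}$ with orthonormal columns. Let $H$ be any function mapping $n\times n$ diagonal matrices to $n\times n$ diagonal matrices, and define $\hat\Sigma_H=\frac1n VH(\Lambda^2)V^T$. Then (whenever the expectation exists) $\mathbb{E}\hat\Sigma_H=PC_H^2P^T$ for some diagonal matrix $C_H$.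
   Context: $\mathbf{1}$ denotes the all-ones vector in $\mathbb{R}^{n+1}$; $\Pi X$ has rank $n$ almost surely. *)

theory Defs
  imports "HOL-Analysis.Analysis" "HOL-Probability.Probability"
begin

definition diag_mat :: "real^'n^'n \<Rightarrow> bool" where
  "diag_mat A \<longleftrightarrow> (\<forall>i j. i \<noteq> j \<longrightarrow> A $ i $ j = 0)"

definition spd_mat :: "real^'n^'n \<Rightarrow> bool" where
  "spd_mat A \<longleftrightarrow> transpose A = A \<and> (\<forall>x. x \<noteq> 0 \<longrightarrow> x \<bullet> (A *v x) > 0)"

definition mvn_density :: "real^'p \<Rightarrow> real^'p^'p \<Rightarrow> real^'p \<Rightarrow> real" where
  "mvn_density mu Theta x =
     exp (- (1/2) * ((x - mu) \<bullet> (matrix_inv Theta *v (x - mu))))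
     / sqrt ((2 * pi) ^ CARD('p) * det Theta)"

definition gauss_rows :: "real^'p \<Rightarrow> real^'p^'p \<Rightarrow> (real^'p^'m) measure" where
  "gauss_rows mu Theta =
     density lborel (\<lambda>X. \<Prod>i\<in>UNIV. ennreal (mvn_density mu Theta (X $ i)))"

text \<open>Centering matrix Pi = I - (1/(n+1)) 1 1^T, with n+1 = CARD('m).\<close>
definition centering :: "real^'m^'m" where
  "centering = mat 1 - (\<chi> i j. 1 / real CARD('m))"

definition is_svd :: "real^'p^'m \<Rightarrow> real^('n::{finite,linorder})^'m \<Rightarrow> real^('n::{finite,linorder})^('n::{finite,linorder}) \<Rightarrow> real^('n::{finite,linorder})^'p \<Rightarrow> bool"
  where
  "is_svd A U L V \<longleftrightarrow>
     A = U ** L ** transpose V \<and>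
     transpose U ** U = mat 1 \<and> transpose V ** V = mat 1 \<and>
     diag_mat L \<and> (\<forall>k. L $ k $ k \<ge> 0) \<and>
     (\<forall>k l. k \<le> l \<longrightarrow> L $ l $ l \<le> L $ k $ k)"

end

theory Submission
  imports Defs
begin

lemma emeasure_ball_translate:
  "emeasure lborel (ball (c::'a::euclidean_space) r) = emeasure lborel (ball (d::'a) r)"
  by (cases "r \<ge> 0") (simp_all add: emeasure_ball ball_empty)

lemma lborel_isometry:
  fixes f :: "'a::euclidean_space \<Rightarrow> 'a"
  assumes lin: "linear f" and iso: "\<And>x. norm (f x) = norm x"
  shows "distr lborel borel f = lborel"
proof -
  have inj: "inj f"
  proof (rule injI)
    fix x y assume "f x = f y"
    then have "norm (f (x - y)) = 0" by (simp add: lin linear_diff)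
    then show "x = y" by (simp add: iso)
  qed
  then obtain h where hl: "linear h" and hf: "\<And>x. h (f x) = x" and fh: "\<And>x. f (h x) = x"
    using lin linear_injective_isomorphism by metis
  have contf: "continuous_on UNIV f"
    by (simp add: lin linear_continuous_on linear_linear)
  have fmeas[measurable]: "f \<in> borel_measurable borel"
    using contf by (simp add: borel_measurable_continuous_onI)
  have preball: "f -` ball c r = ball (h c) r" for c r
  proof -
    have "dist c (f x) = dist (h c) x" for x
    proof -
      have "dist c (f x) = norm (f (h c) - f x)" by (simp add: fh dist_norm)
      also have "\<dots> = norm (f (h c - x))" by (simp add: lin linear_diff)
      also have "\<dots> = dist (h c) x" by (simp add: iso dist_norm)
      finally show ?thesis .
    qed
    then show ?thesis by auto
  qed
  have open_eq: "emeasure (distr lborel borel f) U = emeasure lborel U" if U: "open U" for U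
  proof -
    define K where "K = {i::'a \<times> real. 0 < snd i \<and> ball (fst i) (snd i) \<subseteq> U}"
    have vit: "\<exists>i. i \<in> K \<and> x \<in> ball (fst i) (snd i) \<and> snd i < d" if "x \<in> U" "0 < d" for x d
    proof -
      obtain e where e: "e > 0" "ball x e \<subseteq> U" using U \<open>x \<in> U\<close> open_contains_ball by blast
      show ?thesis
        using e that by (intro exI[of _ "(x, min e (d/2))"]) (auto simp: K_def)
    qed
    obtain C where C: "countable C" "C \<subseteq> K"
      and disj: "pairwise (\<lambda>i j. disjnt (ball (fst i) (snd i)) (ball (fst j) (snd j))) C"
      and negl: "negligible (U - (\<Union>i\<in>C. ball (fst i) (snd i)))"
      by (rule Vitali_covering_theorem_balls[of U K fst snd, OF vit]) blast+
    define B where "B = (\<Union>i\<in>C. ball (fst i) (snd i))"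
    define R where "R = U - B"
    have BU: "B \<subseteq> U" using C by (auto simp: B_def K_def)
    have Bs[measurable]: "B \<in> sets borel"
      unfolding B_def using C(1) by (intro sets.countable_UN'') auto
    have Rs[measurable]: "R \<in> sets borel" unfolding R_def using U by auto
    have UBR: "U = B \<union> R" using BU by (auto simp: R_def)
    have null_of_negl: "N \<in> null_sets lborel" if "negligible N" "N \<in> sets borel" for N :: "'a set"
      using that by (metis negligible_iff_null_sets null_sets_completion_iff sets_lborel)
    have Rnull: "R \<in> null_sets lborel"
      using null_of_negl[OF _ Rs] negl unfolding R_def B_def by blast
    have fR: "f -` R = h ` R"
    proof (intro set_eqI iffI)
      fix x assume "x \<in> f -` R" then show "x \<in> h ` R" by (metis hf image_eqI vimageE)
    next
      fix x assume "x \<in> h ` R" then show "x \<in> f -` R" using fh by auto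
    qed
    have fRnull: "f -` R \<in> null_sets lborel"
    proof (rule null_of_negl)
      show "negligible (f -` R)" unfolding fR
        using negl hl
        by (intro negligible_differentiable_image_negligible)
           (auto simp: R_def B_def linear_imp_differentiable_on)
      show "f -` R \<in> sets borel" using Rs by (simp add: measurable_sets_borel[OF fmeas])
    qed
    have disjf: "disjoint_family_on (\<lambda>i. ball (fst i) (snd i)) C"
      using disj unfolding disjoint_family_on_def pairwise_def disjnt_def by metis
    have disjf': "disjoint_family_on (\<lambda>i. f -` ball (fst i) (snd i)) C"
      using disjf unfolding disjoint_family_on_def by (metis vimage_Int vimage_empty)
    have "emeasure lborel B = (\<integral>\<^sup>+i. emeasure lborel (ball (fst i) (snd i)) \<partial>count_space C)"
      unfolding B_def using C(1) disjf by (intro emeasure_UN_countable) auto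
    also have "\<dots> = (\<integral>\<^sup>+i. emeasure lborel (f -` ball (fst i) (snd i)) \<partial>count_space C)"
      unfolding preball by (intro nn_integral_cong emeasure_ball_translate)
    also have "\<dots> = emeasure lborel (\<Union>i\<in>C. f -` ball (fst i) (snd i))"
      using C(1) disjf' by (intro emeasure_UN_countable[symmetric])
        (auto simp: preball)
    also have "(\<Union>i\<in>C. f -` ball (fst i) (snd i)) = f -` B" by (auto simp: B_def)
    finally have eqB: "emeasure lborel B = emeasure lborel (f -` B)" .
    have "emeasure (distr lborel borel f) U = emeasure lborel (f -` U)"
      using U by (subst emeasure_distr) auto
    also have "f -` U = f -` B \<union> f -` R" using UBR by auto
    also have "emeasure lborel (f -` B \<union> f -` R) = emeasure lborel (f -` B)"
      using fRnull by (intro emeasure_Un_null_set) (auto simp: measurable_sets_borel[OF fmeas])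
    also have "\<dots> = emeasure lborel B" using eqB by simp
    also have "\<dots> = emeasure lborel (B \<union> R)"
      using Rnull by (intro emeasure_Un_null_set[symmetric]) auto
    finally show ?thesis using UBR by simp
  qed
  show ?thesis
  proof (rule measure_eqI_generator_eq[where E="{S. open S}" and \<Omega>=UNIV and A="\<lambda>i. ball 0 (real i)"])
    show "Int_stable {S::'a set. open S}" by (auto simp: Int_stable_def)
    show "sets (distr lborel borel f) = sigma_sets UNIV {S. open S}" by (simp add: sets_borel)
    show "sets lborel = sigma_sets UNIV {S::'a set. open S}" by (simp add: sets_borel)
    show "range (\<lambda>i. ball 0 (real i)) \<subseteq> {S::'a set. open S}" by auto
    show "(\<Union>i. ball (0::'a) (real i)) = UNIV"
      proof -
      have "x \<in> (\<Union>i. ball (0::'a) (real i))" for x :: 'a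
      proof -
        obtain n :: nat where "norm x < real n" using reals_Archimedean2 by blast
        then show ?thesis by auto
      qed
      then show ?thesis by blast
    qed
    show "emeasure (distr lborel borel f) (ball 0 (real i)) \<noteq> \<infinity>" for i
      using open_eq[of "ball 0 (real i)"] emeasure_lborel_ball_finite[of 0 "real i"] by (simp add: less_top)
  qed (auto simp: open_eq)
qed

definition dg :: "('n::finite \<Rightarrow> real) \<Rightarrow> real^'n^'n" where
  "dg d = (\<chi> i j. if i = j then d i else 0)"

lemma dg_mult: "dg a ** dg b = dg (\<lambda>k. a k * b k)"
proof -
  have "(\<Sum>k\<in>UNIV. (if i = k then a i else 0) * (if k = j then b k else 0)) = (if i = j then a i * b i else 0)" for i j
    by (cases "i = j") (auto simp: if_distrib[of "\<lambda>x. x * _"] sum.delta cong: if_cong)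
  then show ?thesis by (simp add: dg_def matrix_matrix_mult_def vec_eq_iff)
qed

lemma diag_dg: "diag_mat L \<Longrightarrow> L = dg (\<lambda>k. L$k$k)"
  by (auto simp: diag_mat_def dg_def vec_eq_iff)

lemma transpose_dg[simp]: "transpose (dg d) = dg d"
  by (auto simp: transpose_def dg_def vec_eq_iff)

lemma diag_mat_dg[simp]: "diag_mat (dg d)"
  by (auto simp: diag_mat_def dg_def)

lemma dg_nth[simp]: "dg d $ i $ j = (if i = j then d i else 0)"
  by (simp add: dg_def)

lemma svd_gram:
  assumes "is_svd A U L V"
  shows "transpose A ** A = V ** dg (\<lambda>k. (L$k$k)^2) ** transpose V"
proof -
  define l where "l = (\<lambda>k. L$k$k)"
  have A: "A = U ** dg l ** transpose V" and UU: "transpose U ** U = mat 1"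
    using assms diag_dg[of L] by (auto simp: is_svd_def l_def)
  have At: "transpose A = V ** dg l ** transpose U"
    unfolding A by (simp add: matrix_transpose_mul matrix_mul_assoc)
  have "transpose A ** A = V ** dg l ** (transpose U ** U) ** dg l ** transpose V"
    by (simp only: At, simp only: A, simp add: matrix_mul_assoc)
  also have "\<dots> = V ** (dg l ** dg l) ** transpose V" by (simp add: UU matrix_mul_assoc)
  also have "dg l ** dg l = dg (\<lambda>k. (L$k$k)^2)" by (simp add: dg_mult l_def power2_eq_square)
  finally show ?thesis .
qed

primrec mpow :: "real^'n^'n \<Rightarrow> nat \<Rightarrow> real^'n^'n" where
  "mpow A 0 = mat 1"
| "mpow A (Suc k) = A ** mpow A k"

lemma mpow_decomp:
  fixes V :: "real^'k^'p"
  assumes VV: "transpose V ** V = mat 1"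
  shows "mpow (V ** dg d ** transpose V) (Suc e) = V ** dg (\<lambda>k. d k ^ Suc e) ** transpose V"
proof (induction e)
  case 0 then show ?case by simp
next
  case (Suc e)
  have "mpow (V ** dg d ** transpose V) (Suc (Suc e))
      = (V ** dg d ** transpose V) ** (V ** dg (\<lambda>k. d k ^ Suc e) ** transpose V)"
    using Suc by simp
  also have "\<dots> = V ** dg d ** (transpose V ** V) ** dg (\<lambda>k. d k ^ Suc e) ** transpose V"
    by (simp add: matrix_mul_assoc)
  also have "\<dots> = V ** (dg d ** dg (\<lambda>k. d k ^ Suc e)) ** transpose V"
    by (simp add: VV matrix_mul_assoc)
  also have "dg d ** dg (\<lambda>k. d k ^ Suc e) = dg (\<lambda>k. d k ^ Suc (Suc e))"
    by (simp add: dg_mult)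
  finally show ?case .
qed

lemma trace_dg: "trace (dg d) = sum d UNIV"
  by (simp add: trace_def)

lemma trace_decomp:
  fixes V :: "real^'k^'p"
  assumes VV: "transpose V ** V = mat 1"
  shows "trace (V ** dg d ** transpose V) = sum d UNIV"
proof -
  have "trace (V ** dg d ** transpose V) = trace (transpose V ** (V ** dg d))"
    by (rule trace_mul_sym)
  also have "\<dots> = trace (dg d)" by (simp add: matrix_mul_assoc VV)
  finally show ?thesis by (simp add: trace_dg)
qed

definition hank :: "real^'p^'p \<Rightarrow> ('n::finite \<Rightarrow> nat) \<Rightarrow> real^'n^'n" where
  "hank G r = (\<chi> i j. trace (mpow G (Suc (r i + r j))))"

definition hsum :: "('k::finite \<Rightarrow> real) \<Rightarrow> ('n::finite \<Rightarrow> nat) \<Rightarrow> real^'n^'n" where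
  "hsum d r = (\<chi> i j. \<Sum>k\<in>UNIV. d k ^ Suc (r i + r j))"

lemma hank_decomp:
  fixes V :: "real^'k^'p"
  assumes VV: "transpose V ** V = mat 1"
  shows "hank (V ** dg d ** transpose V) r = hsum d r"
  by (simp add: hank_def hsum_def mpow_decomp[OF VV] trace_decomp[OF VV] del: mpow.simps)

definition vdm :: "('n::finite \<Rightarrow> real) \<Rightarrow> ('n \<Rightarrow> nat) \<Rightarrow> real^'n^'n" where
  "vdm d r = (\<chi> k i. d k ^ r i)"

lemma hsum_vdm:
  fixes d :: "'n::finite \<Rightarrow> real" and r :: "'n \<Rightarrow> nat"
  shows "hsum d r = transpose (vdm d r) ** dg d ** vdm d r"
proof -
  have "(\<Sum>k\<in>UNIV. (\<Sum>k'\<in>UNIV. d k' ^ r i * (if k' = k then d k' else 0)) * d k ^ r j)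
        = (\<Sum>k\<in>UNIV. d k ^ Suc (r i + r j))" for i j
    by (auto simp: if_distrib[of "\<lambda>x. _ * x"] sum.delta' power_add mult_ac cong: if_cong intro!: sum.cong)
  then show ?thesis
    by (simp add: hsum_def vdm_def matrix_matrix_mult_def transpose_def vec_eq_iff)
qed

lemma det_hsum:
  fixes d :: "'n::finite \<Rightarrow> real" and r :: "'n \<Rightarrow> nat"
  shows "det (hsum d r) = det (vdm d r) ^ 2 * prod d UNIV"
proof -
  have "det (dg d) = prod d UNIV" by (subst det_diagonal) auto
  then show ?thesis by (simp add: hsum_vdm det_mul power2_eq_square)
qed

lemma det_hsum_nz_imp:
  fixes d :: "'n::finite \<Rightarrow> real" and r :: "'n \<Rightarrow> nat"
  assumes "det (hsum d r) \<noteq> 0"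
  shows "inj d" "\<And>k. d k \<noteq> 0"
proof -
  show "inj d"
  proof (rule injI, rule ccontr)
    fix a b assume ab: "d a = d b" "a \<noteq> b"
    have "row a (vdm d r) = row b (vdm d r)" using ab by (simp add: row_def vdm_def vec_eq_iff)
    then have "det (vdm d r) = 0" using det_identical_rows[OF ab(2)] by blast
    then show False using assms by (simp add: det_hsum)
  qed
  show "d k \<noteq> 0" for k
  proof
    assume "d k = 0"
    then have "prod d UNIV = 0" by (intro prod_zero) auto
    then show False using assms by (simp add: det_hsum)
  qed
qed

lemma det_vdm_nz:
  fixes d :: "'n::finite \<Rightarrow> real"
  assumes inj: "inj d" and r: "bij_betw r UNIV {..<CARD('n)}"
  shows "det (vdm d r) \<noteq> 0"
proof -
  let ?n = "CARD('n)"
  have ker: "x = 0" if x: "vdm d r *v x = 0" for x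
  proof -
    define ri where "ri = inv_into UNIV r"
    define c where "c = (\<lambda>j. if j < ?n then x $ ri j else 0)"
    have eq: "(\<Sum>i\<in>UNIV. d k ^ r i * x $ i) = (\<Sum>j\<le>?n - 1. c j * d k ^ j)" for k
    proof -
      have "(\<Sum>j\<le>?n - 1. c j * d k ^ j) = (\<Sum>j\<in>{..<?n}. c j * d k ^ j)"
        by (rule sum.cong) (auto simp: less_Suc_eq_le[symmetric])
      also have "\<dots> = (\<Sum>i\<in>UNIV. c (r i) * d k ^ r i)"
        by (rule sum.reindex_bij_betw[OF r, symmetric])
      also have "\<dots> = (\<Sum>i\<in>UNIV. d k ^ r i * x $ i)"
        using r by (intro sum.cong) (auto simp: c_def ri_def bij_betw_def inv_into_f_f)
      finally show ?thesis by simp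
    qed
    have roots: "range d \<subseteq> {z. (\<Sum>j\<le>?n - 1. c j * z ^ j) = 0}"
    proof safe
      fix k
      have "(vdm d r *v x) $ k = 0" using x by simp
      then have "(\<Sum>i\<in>UNIV. d k ^ r i * x $ i) = 0"
        by (simp add: matrix_vector_mult_def vdm_def)
      then show "(\<Sum>j\<le>?n - 1. c j * d k ^ j) = 0" using eq[of k] by simp
    qed
    have c0: "c j = 0" for j
    proof (rule ccontr)
      assume cj: "c j \<noteq> 0"
      then have "j < ?n" by (auto simp: c_def split: if_splits)
      then have "\<exists>k. k \<le> ?n - 1 \<and> c k \<noteq> 0" using cj by (intro exI[of _ j]) auto
      from polyfun_rootbound[OF this] have fin: "finite {z. (\<Sum>j\<le>?n - 1. c j * z ^ j) = 0}"
        and card: "card {z. (\<Sum>j\<le>?n - 1. c j * z ^ j) = 0} \<le> ?n - 1" by auto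
      have "card (range d) \<le> card {z. (\<Sum>j\<le>?n - 1. c j * z ^ j) = 0}"
        by (rule card_mono[OF fin roots])
      moreover have "card (range d) = ?n" using inj by (simp add: card_image)
      moreover have "?n > 0" by simp
      ultimately show False using card by linarith
    qed
    show "x = 0"
    proof (subst vec_eq_iff, intro allI)
      fix i
      have "r i < ?n" using r by (auto simp: bij_betw_def)
      moreover have "ri (r i) = i" using r by (simp add: ri_def bij_betw_def inv_into_f_f)
      ultimately have "x $ i = c (r i)" by (simp add: c_def)
      then show "x $ i = 0 $ i" using c0 by simp
    qed
  qed
  then obtain B where "B ** vdm d r = mat 1" using matrix_left_invertible_ker by blast
  then have "invertible (vdm d r)"
    using matrix_left_right_inverse unfolding invertible_def by blast
  then show ?thesis using invertible_det_nz by blast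
qed

lemma det_hsum_nz:
  fixes d :: "'n::finite \<Rightarrow> real" and r :: "'n \<Rightarrow> nat"
  assumes "inj d" "\<And>k. d k \<noteq> 0" "bij_betw r UNIV {..<CARD('n)}"
  shows "det (hsum d r) \<noteq> 0"
  using det_vdm_nz[OF assms(1,3)] assms(2) by (simp add: det_hsum)

lemma dg_one: "dg (\<lambda>_. 1) = mat 1"
  by (simp add: dg_def mat_def vec_eq_iff)

lemma dg_left_nth: "(dg a ** M) $ i $ j = a i * M $ i $ j"
  by (simp add: matrix_matrix_mult_def if_distrib[of "\<lambda>x. x * _"] sum.delta cong: if_cong)

lemma dg_right_nth: "(M ** dg a) $ i $ j = M $ i $ j * a j"
  by (simp add: matrix_matrix_mult_def if_distrib[of "\<lambda>x. _ * x"] sum.delta' cong: if_cong)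

lemma strict_mono_bij_id:
  fixes s :: "'n::{finite,linorder} \<Rightarrow> 'n"
  assumes mono: "\<And>a b. a < b \<Longrightarrow> s a < s b"
  shows "s j = j"
proof (rule ccontr)
  assume "s j \<noteq> j"
  have injs: "inj s"
  proof (rule injI, rule ccontr)
    fix a b assume ab: "s a = s b" "a \<noteq> b"
    from ab(2) consider "a < b" | "b < a" by (rule linorder_neqE)
    then show False
    proof cases
      case 1 then show False using mono[of a b] ab(1) by simp
    next
      case 2 then show False using mono[of b a] ab(1) by simp
    qed
  qed
  then have surjs: "surj s" by (rule finite_UNIV_inj_surj[OF finite_class.finite_UNIV])
  define D where "D = {k. s k \<noteq> k}"
  have "D \<noteq> {}" using \<open>s j \<noteq> j\<close> by (auto simp: D_def)
  define m where "m = Min D"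
  have mD: "m \<in> D" using \<open>D \<noteq> {}\<close> by (simp add: m_def)
  have below: "s k = k" if "k < m" for k
  proof (rule ccontr)
    assume "s k \<noteq> k"
    then have "k \<in> D" by (simp add: D_def)
    then have "m \<le> k" unfolding m_def by (intro Min_le) auto
    then show False using that by simp
  qed
  have smm: "s m \<noteq> m" using mD by (simp add: D_def)
  then consider "s m < m" | "m < s m" by (rule linorder_neqE)
  then show False
  proof cases
    case 1
    then have "s (s m) = s m" by (rule below)
    then have "s m = m" using injs by (simp add: inj_eq)
    then show False using mD by (simp add: D_def)
  next
    case 2
    obtain k where k: "s k = m" using surjs by (metis surjD)
    consider "k < m" | "k = m" | "m < k" by fastforce
    then show False
    proof cases
      case 1 then show False using below[OF 1] k 2 by simp
    next
      case 2 then show False using k mD by (simp add: D_def)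
    next
      case 3 then have "s m < s k" by (rule mono)
      then show False using k \<open>m < s m\<close> by simp
    qed
  qed
qed

lemma svd_unique:
  fixes A :: "real^'p^'m" and U U' :: "real^('n::{finite,linorder})^'m"
    and L L' :: "real^('n::{finite,linorder})^('n::{finite,linorder})" and V V' :: "real^('n::{finite,linorder})^'p"
  assumes s1: "is_svd A U L V" and s2: "is_svd A U' L' V'"
    and pos1: "\<And>k. L$k$k > 0" and pos2: "\<And>k. L'$k$k > 0"
    and str1: "\<And>k l. k < l \<Longrightarrow> L$l$l < L$k$k"
    and str2: "\<And>k l. k < l \<Longrightarrow> L'$l$l < L'$k$k"
  shows "L' = L" "\<exists>w. (\<forall>k. (w k)^2 = 1) \<and> V' = V ** dg w"
proof -
  define l where "l = (\<lambda>k. L$k$k)"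
  define l' where "l' = (\<lambda>k. L'$k$k)"
  define lam where "lam = (\<lambda>k. (l k)^2)"
  define lam' where "lam' = (\<lambda>k. (l' k)^2)"
  define G where "G = transpose A ** A"
  have G1: "G = V ** dg lam ** transpose V"
    using svd_gram[OF s1] by (simp add: G_def lam_def l_def)
  have G2: "G = V' ** dg lam' ** transpose V'"
    using svd_gram[OF s2] by (simp add: G_def lam'_def l'_def)
  have VV: "transpose V ** V = mat 1" and VV': "transpose V' ** V' = mat 1"
    using s1 s2 by (auto simp: is_svd_def)
  define W where "W = transpose V ** V'"
  have GV': "G ** V' = V' ** dg lam'"
  proof -
    have "G ** V' = V' ** dg lam' ** (transpose V' ** V')" by (simp add: G2 matrix_mul_assoc)
    then show ?thesis by (simp add: VV')
  qed
  have VVG: "V ** transpose V ** G = G"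
  proof -
    have "V ** transpose V ** G = V ** (transpose V ** V) ** dg lam ** transpose V"
      by (simp add: G1 matrix_mul_assoc)
    then show ?thesis by (simp add: VV G1)
  qed
  have "V ** W ** dg lam' = V' ** dg lam'"
  proof -
    have "V ** W ** dg lam' = V ** transpose V ** (G ** V')"
      by (simp add: W_def GV' matrix_mul_assoc)
    also have "\<dots> = (V ** transpose V ** G) ** V'" by (simp add: matrix_mul_assoc)
    also have "\<dots> = V' ** dg lam'" by (simp add: VVG GV')
    finally show ?thesis .
  qed
  then have "V ** W ** dg lam' ** dg (\<lambda>k. inverse (lam' k)) = V' ** dg lam' ** dg (\<lambda>k. inverse (lam' k))"
    by simp
  moreover have "dg lam' ** dg (\<lambda>k. inverse (lam' k)) = mat 1"
  proof -
    have "lam' k \<noteq> 0" for k using pos2[of k] by (simp add: lam'_def l'_def)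
    then have "(\<lambda>k. lam' k * inverse (lam' k)) = (\<lambda>_. 1)" by (simp add: fun_eq_iff)
    then show ?thesis by (simp add: dg_mult dg_one)
  qed
  ultimately have VW: "V ** W = V'" by (simp add: matrix_mul_assoc[symmetric])
  have WW: "transpose W ** W = mat 1"
  proof -
    have "transpose W ** W = transpose W ** (transpose V ** V) ** W" by (simp add: VV)
    also have "\<dots> = transpose (V ** W) ** (V ** W)" by (simp add: matrix_transpose_mul matrix_mul_assoc)
    also have "\<dots> = mat 1" by (simp add: VW VV')
    finally show ?thesis .
  qed
  have comm: "dg lam ** W = W ** dg lam'"
  proof -
    have "transpose V ** G ** V' = (transpose V ** V) ** dg lam ** (transpose V ** V')"
      by (simp add: G1 matrix_mul_assoc)
    also have "\<dots> = dg lam ** W" by (simp add: VV W_def)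
    finally have 1: "transpose V ** G ** V' = dg lam ** W" .
    have "transpose V ** G ** V' = transpose V ** (G ** V')" by (simp add: matrix_mul_assoc)
    also have "\<dots> = W ** dg lam'" by (simp add: GV' W_def matrix_mul_assoc)
    finally show ?thesis using 1 by simp
  qed
  have ent: "lam i * W$i$j = W$i$j * lam' j" for i j
    using arg_cong[OF comm, of "\<lambda>M. M$i$j"] by (simp add: dg_left_nth dg_right_nth)
  have colnorm: "(\<Sum>i\<in>UNIV. W$i$j * W$i$j) = 1" for j
    using arg_cong[OF WW, of "\<lambda>M. M$j$j"] by (simp add: matrix_matrix_mult_def transpose_def mat_def)
  have linj: "a = b" if ab: "l a = l b" for a b
  proof (rule ccontr)
    assume "a \<noteq> b"
    then consider "a < b" | "b < a" by (rule linorder_neqE)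
    then show False using str1[of a b] str1[of b a] ab by cases (auto simp: l_def)
  qed
  have match: "l i = l' j" if "W$i$j \<noteq> 0" for i j
  proof -
    have "lam i = lam' j" using ent[of i j] that by simp
    then have "(l i)^2 = (l' j)^2" by (simp add: lam_def lam'_def)
    moreover have "l i > 0" "l' j > 0" using pos1 pos2 by (auto simp: l_def l'_def)
    ultimately show ?thesis by (simp add: power2_eq_iff)
  qed
  have ex: "\<exists>i. W$i$j \<noteq> 0" for j
  proof (rule ccontr)
    assume "\<not> (\<exists>i. W$i$j \<noteq> 0)"
    then have "(\<Sum>i\<in>UNIV. W$i$j * W$i$j) = 0" by simp
    then show False using colnorm[of j] by simp
  qed
  define s where "s = (\<lambda>j. SOME i. W$i$j \<noteq> 0)"
  have sW: "W$(s j)$j \<noteq> 0" for j unfolding s_def using ex[of j] by (rule someI_ex)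
  have ls: "l (s j) = l' j" for j using match[OF sW] .
  have sonly: "i = s j" if "W$i$j \<noteq> 0" for i j
  proof (rule linj)
    show "l i = l (s j)" using match[OF that] ls[of j] by simp
  qed
  have lmono: "a \<le> b \<Longrightarrow> l b \<le> l a" for a b
    using str1[of a b] by (cases "a = b") (auto simp: l_def less_le intro: less_imp_le)
  have smono: "s a < s b" if "a < b" for a b
  proof (rule ccontr)
    assume "\<not> s a < s b"
    then have "s b \<le> s a" by simp
    then have "l (s a) \<le> l (s b)" by (rule lmono)
    then have "l' a \<le> l' b" by (simp add: ls)
    moreover have "l' b < l' a" using str2[OF that] by (simp add: l'_def)
    ultimately show False by simp
  qed
  have sid: "s j = j" for j by (rule strict_mono_bij_id[OF smono])
  have ll': "l' = l" using ls sid by (auto simp: fun_eq_iff)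
  have "diag_mat L" "diag_mat L'" using s1 s2 by (simp_all add: is_svd_def)
  then have "L = dg l" "L' = dg l'" unfolding l_def l'_def by (simp_all add: diag_dg[symmetric])
  then show "L' = L" using ll' by simp
  define w where "w = (\<lambda>k. W$k$k)"
  have Wdg: "W = dg w"
    using sonly sid by (auto simp: vec_eq_iff w_def dg_def)
  have w2: "(w k)^2 = 1" for k
  proof -
    have "(\<Sum>i\<in>UNIV. (if i = k then w i else 0) * (if i = k then w i else 0)) = w k * w k"
      by (simp add: if_distrib[of "\<lambda>x. x * _"] if_distrib[of "\<lambda>x. _ * x"] cong: if_cong)
    then show ?thesis using colnorm[of k] unfolding Wdg by (simp add: power2_eq_square)
  qed
  show "\<exists>w. (\<forall>k. (w k)^2 = 1) \<and> V' = V ** dg w"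
    using w2 by (intro exI[of _ w]) (simp add: VW[symmetric] Wdg[symmetric])
qed

definition gram :: "real^'p^'m \<Rightarrow> real^'p^'p" where
  "gram X = transpose (centering ** X) ** (centering ** X)"

definition qf :: "('n::finite \<Rightarrow> nat) \<Rightarrow> real^'p^'m \<Rightarrow> real" where
  "qf r X = det (hank (gram X) r)"

definition mpoly :: "('a::real_normed_vector \<Rightarrow> real^'k^'l) \<Rightarrow> bool" where
  "mpoly M \<longleftrightarrow> (\<forall>i j. real_polynomial_function (\<lambda>x. M x $ i $ j))"

lemma mpoly_id: "mpoly (\<lambda>X::real^'k^'l. X)"
proof -
  have "bounded_linear (\<lambda>X::real^'k^'l. X $ i $ j)" for i j
    using bounded_linear_compose[OF bounded_linear_vec_nth[of j] bounded_linear_vec_nth[of i]] by simp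
  then show ?thesis by (auto simp: mpoly_def)
qed

lemma mpoly_const: "mpoly (\<lambda>x. C)"
  by (auto simp: mpoly_def)

lemma mpoly_mult: "mpoly A \<Longrightarrow> mpoly B \<Longrightarrow> mpoly (\<lambda>x. A x ** B x)"
  unfolding mpoly_def matrix_matrix_mult_def
  by (auto intro!: real_polynomial_function_sum real_polynomial_function.intros(4))

lemma mpoly_transpose: "mpoly A \<Longrightarrow> mpoly (\<lambda>x. transpose (A x))"
  unfolding mpoly_def transpose_def by simp

lemma mpoly_mpow: "mpoly A \<Longrightarrow> mpoly (\<lambda>x. mpow (A x) e)"
  by (induction e) (auto intro: mpoly_mult mpoly_const)

lemma rpf_trace: "mpoly A \<Longrightarrow> real_polynomial_function (\<lambda>x. trace (A x))"
  unfolding mpoly_def trace_def by (auto intro!: real_polynomial_function_sum)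

lemma rpf_det: "mpoly A \<Longrightarrow> real_polynomial_function (\<lambda>x. det (A x))"
  unfolding mpoly_def det_def
  by (auto intro!: real_polynomial_function_sum real_polynomial_function.intros(4)
      real_polynomial_function.intros(2) real_polynomial_function_prod)

lemma mpoly_hank: assumes G: "mpoly G" shows "mpoly (\<lambda>x. hank (G x) r)"
  unfolding hank_def mpoly_def using rpf_trace[OF mpoly_mpow[OF G]] by (simp del: mpow.simps)

lemma rpf_qf: "real_polynomial_function (\<lambda>X::real^'p^'m. qf r X)"
proof -
  have "mpoly (\<lambda>X::real^'p^'m. centering ** X)" by (intro mpoly_mult mpoly_const mpoly_id)
  then have "mpoly (\<lambda>X::real^'p^'m. gram X)" unfolding gram_def by (intro mpoly_mult mpoly_transpose mpoly_const mpoly_id)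
  then show ?thesis unfolding qf_def by (intro rpf_det mpoly_hank)
qed

lemma qf_svd:
  assumes "is_svd (centering ** X) U L V"
  shows "qf r X = det (hsum (\<lambda>k. (L$k$k)^2) r)"
proof -
  have VV: "transpose V ** V = mat 1" using assms by (simp add: is_svd_def)
  show ?thesis unfolding qf_def gram_def svd_gram[OF assms] hank_decomp[OF VV] ..
qed

lemma generic:
  fixes L :: "real^('n::{finite,linorder})^('n::{finite,linorder})" and r :: "'n \<Rightarrow> nat"
  assumes svd: "is_svd (centering ** X) U L V" and q: "qf r X \<noteq> 0"
  shows "\<And>k. L$k$k > 0" "\<And>k l. k < l \<Longrightarrow> L$l$l < L$k$k"
proof -
  have d: "det (hsum (\<lambda>k. (L$k$k)^2) r) \<noteq> 0" using q by (simp add: qf_svd[OF svd])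
  note nz = det_hsum_nz_imp[OF d]
  have nn: "L$k$k \<ge> 0" for k using svd by (simp add: is_svd_def)
  show "L$k$k > 0" for k using nz(2)[of k] nn[of k] by (simp add: order_less_le)
  show "L$l$l < L$k$k" if "k < l" for k l
  proof -
    have "L$l$l \<le> L$k$k" using svd that by (simp add: is_svd_def)
    moreover have "L$l$l \<noteq> L$k$k"
    proof
      assume "L$l$l = L$k$k"
      then have "l = k" using nz(1) by (simp add: inj_def)
      then show False using that by simp
    qed
    ultimately show ?thesis by simp
  qed
qed

lemma lborel_affine_isometry:
  fixes f :: "'a::euclidean_space \<Rightarrow> 'a"
  assumes lin: "linear f" and iso: "\<And>x. norm (f x) = norm x"
  shows "distr lborel borel (\<lambda>x. c + f x) = lborel"
proof -
  have fm: "f \<in> measurable borel borel"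
    by (intro borel_measurable_continuous_onI linear_continuous_on) (use lin linear_conv_bounded_linear in blast)
  have cm: "(+) c \<in> measurable borel borel" by measurable
  have tr: "distr lborel borel ((+) c) = lborel"
    using lborel_affine[of 1 c] by (simp add: density_1)
  have "distr lborel borel (\<lambda>x. c + f x) = distr (distr lborel borel f) borel ((+) c)"
    using fm cm by (subst distr_distr) (auto simp: o_def)
  also have "\<dots> = lborel" by (simp add: lborel_isometry[OF lin iso] tr)
  finally show ?thesis .
qed

lemma orth_inner:
  fixes S :: "real^'p^'p"
  assumes So: "transpose S ** S = mat 1"
  shows "(S *v x) \<bullet> (S *v y) = x \<bullet> y"
proof -
  have "(S *v x) \<bullet> (S *v y) = (x v* transpose S) \<bullet> (S *v y)" by simp
  also have "\<dots> = x \<bullet> (transpose S *v (S *v y))" by (rule dot_lmul_matrix)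
  also have "\<dots> = x \<bullet> y" by (simp add: matrix_vector_mul_assoc So)
  finally show ?thesis .
qed

lemma rowmult_nth:
  fixes X :: "real^'p^'m" and S :: "real^'p^'p"
  shows "(X ** transpose S) $ i = S *v (X $ i)"
  unfolding vec_eq_iff matrix_matrix_mult_def matrix_vector_mult_def transpose_def
  by (simp add: mult.commute[of "X $ i $ _"])

lemma rowmult_isometry:
  fixes S :: "real^'p^'p"
  assumes So: "transpose S ** S = mat 1"
  shows "linear (\<lambda>X::real^'p^'m. X ** transpose S)" "norm (X ** transpose S) = norm X"
proof -
  show "linear (\<lambda>X::real^'p^'m. X ** transpose S)"
    by (rule linearI)
      (simp_all add: vec_eq_iff matrix_matrix_mult_def sum.distrib distrib_right sum_distrib_left mult.assoc)
  have "(X ** transpose S) \<bullet> (X ** transpose S) = X \<bullet> X"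
    by (simp add: inner_vec_def[of "X ** transpose S"] inner_vec_def[of X] rowmult_nth orth_inner[OF So])
  then show "norm (X ** transpose S) = norm X" by (simp add: norm_eq_sqrt_inner)
qed

lemma mvn_invariant:
  fixes S :: "real^'p^'p"
  assumes SN: "transpose S ** matrix_inv Theta ** S = matrix_inv Theta"
  shows "mvn_density mu Theta (mu + S *v (x - mu)) = mvn_density mu Theta x"
proof -
  let ?N = "matrix_inv Theta"
  have "(S *v (x - mu)) \<bullet> (?N *v (S *v (x - mu))) = ((x - mu) v* transpose S) \<bullet> (?N *v (S *v (x - mu)))"
    by simp
  also have "\<dots> = (x - mu) \<bullet> (transpose S *v (?N *v (S *v (x - mu))))" by (rule dot_lmul_matrix)
  also have "\<dots> = (x - mu) \<bullet> ((transpose S ** ?N ** S) *v (x - mu))" by (simp add: matrix_vector_mul_assoc matrix_mul_assoc)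
  also have "\<dots> = (x - mu) \<bullet> (?N *v (x - mu))" by (simp add: SN)
  finally show ?thesis by (simp add: mvn_density_def)
qed

lemma centering_const_rows: "centering ** (\<chi> i. v) = (0::real^'p^'m)"
proof -
  have "(\<Sum>k\<in>UNIV. ((if i = k then 1 else 0) - 1 / real CARD('m)) * v $ j) = 0" for i :: 'm and j :: 'p
  proof -
    have "(\<Sum>k\<in>UNIV. ((if i = k then 1 else 0) - 1 / real CARD('m)) * v $ j)
        = (\<Sum>k\<in>UNIV. ((if i = k then 1 else 0) - 1 / real CARD('m))) * v $ j"
      by (simp add: sum_distrib_right)
    also have "(\<Sum>k\<in>UNIV. ((if i = k then 1 else (0::real)) - 1 / real CARD('m))) = 0"
      by (simp add: sum_subtractf)
    finally show ?thesis by simp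
  qed
  then show ?thesis
    by (simp add: centering_def matrix_matrix_mult_def mat_def vec_eq_iff)
qed

lemma equiv:
  fixes H :: "real^('n::{finite,linorder})^('n::{finite,linorder}) \<Rightarrow> real^('n::{finite,linorder})^('n::{finite,linorder})"
    and Uf :: "real^'p^'m \<Rightarrow> real^('n::{finite,linorder})^'m"
    and Lf :: "real^'p^'m \<Rightarrow> real^('n::{finite,linorder})^('n::{finite,linorder})"
    and Vf :: "real^'p^'m \<Rightarrow> real^('n::{finite,linorder})^'p"
    and r :: "'n \<Rightarrow> nat" and S :: "real^'p^'p" and v :: "real^'p"
  assumes H_diag: "\<And>A. diag_mat A \<Longrightarrow> diag_mat (H A)"
    and svd: "\<And>X. is_svd (centering ** X) (Uf X) (Lf X) (Vf X)"
    and So: "transpose S ** S = mat 1"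
    and q: "qf r X \<noteq> 0"
  defines "Y \<equiv> X ** transpose S + (\<chi> i. v)"
  shows "Lf Y = Lf X \<and> Vf Y ** H (Lf Y ** Lf Y) ** transpose (Vf Y)
           = S ** (Vf X ** H (Lf X ** Lf X) ** transpose (Vf X)) ** transpose S"
proof -
  have CY: "centering ** Y = (centering ** X) ** transpose S"
    unfolding Y_def by (simp add: matrix_add_ldistrib centering_const_rows matrix_mul_assoc)
  have svd2: "is_svd (centering ** Y) (Uf X) (Lf X) (S ** Vf X)"
  proof -
    have s: "is_svd (centering ** X) (Uf X) (Lf X) (Vf X)" by (rule svd)
    have "centering ** Y = Uf X ** Lf X ** transpose (S ** Vf X)"
      using s unfolding CY is_svd_def by (simp add: matrix_transpose_mul matrix_mul_assoc)
    moreover have "transpose (S ** Vf X) ** (S ** Vf X) = mat 1"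
    proof -
      have "transpose (S ** Vf X) ** (S ** Vf X) = transpose (Vf X) ** (transpose S ** S) ** Vf X"
        by (simp add: matrix_transpose_mul matrix_mul_assoc)
      then show ?thesis using s So by (simp add: is_svd_def)
    qed
    ultimately show ?thesis using s by (simp add: is_svd_def)
  qed
  have q2: "qf r Y \<noteq> 0"
    using q by (simp add: qf_svd[OF svd2] qf_svd[OF svd[of X]])
  note g1 = generic[OF svd2 q2]
  note g2 = generic[OF svd[of Y] q2]
  note u = svd_unique[OF svd2 svd[of Y] g1(1) g2(1) g1(2) g2(2)]
  obtain w where w2: "\<And>k. (w k)^2 = 1" and VY: "Vf Y = S ** Vf X ** dg w"
    using u(2) by blast
  define Hd where "Hd = H (Lf X ** Lf X)"
  have "diag_mat (Lf X ** Lf X)"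
  proof -
    have "diag_mat (Lf X)" using svd[of X] by (simp add: is_svd_def)
    then have "Lf X = dg (\<lambda>k. Lf X $ k $ k)" by (rule diag_dg)
    then have "Lf X ** Lf X = dg (\<lambda>k. Lf X $ k $ k * Lf X $ k $ k)" by (metis dg_mult)
    then show ?thesis by simp
  qed
  then have "diag_mat Hd" unfolding Hd_def by (rule H_diag)
  then have Hdg: "Hd = dg (\<lambda>k. Hd $ k $ k)" by (rule diag_dg)
  have wHw: "dg w ** Hd ** dg w = Hd"
  proof -
    have "dg w ** Hd ** dg w = dg (\<lambda>k. w k * Hd $ k $ k * w k)"
      by (subst Hdg) (simp add: dg_mult)
    also have "(\<lambda>k. w k * Hd $ k $ k * w k) = (\<lambda>k. Hd $ k $ k)"
      using w2 by (auto simp: fun_eq_iff power2_eq_square mult_ac)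
    finally show ?thesis using Hdg by simp
  qed
  have "Vf Y ** H (Lf Y ** Lf Y) ** transpose (Vf Y) = S ** Vf X ** (dg w ** Hd ** dg w) ** transpose (Vf X) ** transpose S"
    by (simp add: VY u(1) Hd_def matrix_transpose_mul matrix_mul_assoc)
  also have "\<dots> = S ** (Vf X ** Hd ** transpose (Vf X)) ** transpose S"
    by (simp add: wHw matrix_mul_assoc)
  finally show ?thesis using u(1) by (simp add: Hd_def)
qed

lemma real_poly_finite_roots:
  fixes g :: "real \<Rightarrow> real"
  assumes "real_polynomial_function g" "g 0 \<noteq> 0"
  shows "finite {t. g t = 0}"
proof -
  obtain a n where g: "g = (\<lambda>x. \<Sum>i\<le>n. a i * x^i)"
    using real_polynomial_function_imp_sum[OF assms(1)] by blast
  have "(\<Sum>i\<le>n. a i * (0::real)^i) = (\<Sum>i\<in>{0}. a i * (0::real)^i)"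
    by (rule sum.mono_neutral_right) auto
  then have "a 0 \<noteq> 0" using assms(2) unfolding g by simp
  then have "finite {z. (\<Sum>i\<le>n. a i * z^i) = 0}"
    using polyfun_finite_roots[of a n] by auto
  then show ?thesis unfolding g .
qed

lemma poly_zero_null:
  fixes q :: "'a::euclidean_space \<Rightarrow> real"
  assumes qp: "real_polynomial_function q" and q0: "q x0 \<noteq> 0"
  shows "{x. q x = 0} \<in> null_sets lborel"
proof -
  define Z where "Z = {x. q x = 0}"
  have contq: "continuous_on UNIV q"
    using qp continuous_on_polymonial_function real_polynomial_function_eq by blast
  have "closed Z" unfolding Z_def
    using continuous_closed_preimage_constant[OF contq closed_UNIV, of 0] by simp
  then have Zs[measurable]: "Z \<in> sets borel" by simp
  define T where "T = (\<lambda>t y. (x0 - t *\<^sub>R x0) + t *\<^sub>R (y::'a))"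
  have Tmeas[measurable]: "(\<lambda>p. T (snd p) (fst p)) \<in> borel_measurable (lborel \<Otimes>\<^sub>M lborel)"
    unfolding T_def by measurable
  define E where "E = (\<lambda>t. \<integral>\<^sup>+ y. indicator Z (T t y) \<partial>lborel)"
  have scale: "emeasure lborel Z = ennreal (\<bar>t\<bar> ^ DIM('a)) * E t" if "t \<noteq> 0" for t
  proof -
    have "emeasure lborel Z = emeasure (density (distr lborel borel (\<lambda>x. (x0 - t *\<^sub>R x0) + t *\<^sub>R x)) (\<lambda>_. ennreal (\<bar>t\<bar> ^ DIM('a)))) Z"
      using lborel_affine[OF that, of "x0 - t *\<^sub>R x0"] by simp
    also have "\<dots> = ennreal (\<bar>t\<bar> ^ DIM('a)) * emeasure (distr lborel borel (\<lambda>x. (x0 - t *\<^sub>R x0) + t *\<^sub>R x)) Z"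
      by (subst emeasure_density_const) auto
    also have "emeasure (distr lborel borel (\<lambda>x. (x0 - t *\<^sub>R x0) + t *\<^sub>R x)) Z = E t"
    proof -
      have m: "{x. x0 - t *\<^sub>R x0 + t *\<^sub>R x \<in> Z} \<in> sets lborel" by measurable
      have "emeasure (distr lborel borel (\<lambda>x. (x0 - t *\<^sub>R x0) + t *\<^sub>R x)) Z
          = emeasure lborel {x. x0 - t *\<^sub>R x0 + t *\<^sub>R x \<in> Z}"
        by (subst emeasure_distr) (auto simp: vimage_def)
      also have "\<dots> = (\<integral>\<^sup>+ y. indicator {x. x0 - t *\<^sub>R x0 + t *\<^sub>R x \<in> Z} y \<partial>lborel)"
        using m by (rule nn_integral_indicator[symmetric])
      also have "\<dots> = E t" unfolding E_def T_def
        by (intro nn_integral_cong) (auto simp: indicator_def)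
      finally show ?thesis .
    qed
    finally show ?thesis .
  qed
  have inner0: "(\<integral>\<^sup>+ t. indicator {1..2} t * indicator Z (T t y) \<partial>lborel) = 0" for y
  proof -
    define g where "g = (\<lambda>t. q (T t y))"
    have "polynomial_function (\<lambda>t::real. (x0 - t *\<^sub>R x0) + t *\<^sub>R y)"
    proof -
      have "(\<lambda>t::real. (x0 - t *\<^sub>R x0) + t *\<^sub>R y) = (\<lambda>t. x0 + t *\<^sub>R (y - x0))"
        by (auto simp: algebra_simps)
      moreover have "polynomial_function (\<lambda>t::real. x0 + t *\<^sub>R (y - x0))"
        by (intro polynomial_function_add polynomial_function_const
             polynomial_function_bounded_linear bounded_linear_scaleR_left)
      ultimately show ?thesis by simp
    qed
    then have "real_polynomial_function g"
      unfolding g_def T_def using real_polynomial_function_compose[OF _ qp] by (simp add: o_def)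
    moreover have "g 0 \<noteq> 0" using q0 by (simp add: g_def T_def)
    ultimately have fin: "finite {t. g t = 0}" by (rule real_poly_finite_roots)
    have "AE t in lborel. t \<notin> {t. g t = 0}"
      using finite_imp_null_set_lborel[OF fin] by (rule AE_not_in)
    then have ae: "AE t in lborel. indicator {1..2} t * indicator Z (T t y) = (0::ennreal)"
      by eventually_elim (auto simp: Z_def g_def indicator_def)
    show ?thesis by (subst nn_integral_cong_AE[OF ae]) simp
  qed
  have "(\<integral>\<^sup>+ t. indicator {1..2} t * E t \<partial>lborel)
      = (\<integral>\<^sup>+ t. (\<integral>\<^sup>+ y. indicator {1..2} t * indicator Z (T t y) \<partial>lborel) \<partial>lborel)"
    unfolding E_def T_def
    by (intro nn_integral_cong nn_integral_cmult[symmetric]) measurable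
  also have "\<dots> = (\<integral>\<^sup>+ y. (\<integral>\<^sup>+ t. indicator {1..2} t * indicator Z (T t y) \<partial>lborel) \<partial>lborel)"
    unfolding T_def by (rule lborel_pair.Fubini') measurable
  also have "\<dots> = 0" by (simp add: inner0)
  finally have intE: "(\<integral>\<^sup>+ t. indicator {1..2} t * E t \<partial>lborel) = 0" .
  have "emeasure lborel Z = (\<integral>\<^sup>+ t. indicator {1..2::real} t * emeasure lborel Z \<partial>lborel)"
    by (simp add: nn_integral_multc)
  also have "\<dots> \<le> (\<integral>\<^sup>+ t. indicator {1..2} t * (ennreal (2 ^ DIM('a)) * E t) \<partial>lborel)"
  proof (intro nn_integral_mono)
    fix t :: real
    show "indicator {1..2} t * emeasure lborel Z \<le> indicator {1..2} t * (ennreal (2 ^ DIM('a)) * E t)"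
    proof (cases "t \<in> {1..2}")
      case True
      then have "t \<noteq> 0" by auto
      have "ennreal (\<bar>t\<bar> ^ DIM('a)) \<le> ennreal (2 ^ DIM('a))"
        using True by (intro ennreal_leI power_mono) auto
      then show ?thesis using True scale[OF \<open>t \<noteq> 0\<close>] by (auto intro: mult_right_mono)
    qed simp
  qed
  also have "\<dots> = ennreal (2 ^ DIM('a)) * (\<integral>\<^sup>+ t. indicator {1..2} t * E t \<partial>lborel)"
    unfolding E_def T_def
    by (subst nn_integral_cmult[symmetric]) (measurable, auto simp: mult_ac)
  also have "\<dots> = 0" by (simp add: intE)
  finally have "emeasure lborel Z = 0" by simp
  then show ?thesis using Zs by (simp add: Z_def null_sets_def)
qed

lemma witness:
  fixes r :: "'n::finite \<Rightarrow> nat"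
  assumes dm: "CARD('m) = CARD('n) + 1" and dp: "CARD('p) > CARD('n)"
    and r: "bij_betw r UNIV {..<CARD('n)}"
  shows "\<exists>X::real^'p^'m. qf r X \<noteq> 0"
proof -
  define one :: "real^'m" where "one = (\<chi> i. 1)"
  have one0: "one \<noteq> 0" by (simp add: one_def vec_eq_iff)
  define S where "S = {x::real^'m. one \<bullet> x = 0}"
  obtain B where BS: "B \<subseteq> S" and Borth: "pairwise orthogonal B"
    and Bnorm: "\<And>x. x \<in> B \<Longrightarrow> norm x = 1" and Bcard: "card B = dim S"
    using orthonormal_basis_subspace[OF subspace_hyperplane[of one]] unfolding S_def by metis
  have "dim S = CARD('n)" unfolding S_def using dim_hyperplane[OF one0] dm by simp
  then have cardB: "card (UNIV::'n set) = card B" using Bcard by simp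
  have finB: "finite B"
  proof (rule ccontr)
    assume "infinite B" then have "card B = 0" by simp
    then show False using cardB by simp
  qed
  obtain u where u: "bij_betw u (UNIV::'n set) B"
    using finite_same_card_bij[OF finite_class.finite_UNIV finB cardB] by blast
  have uB: "u k \<in> B" for k using u by (auto simp: bij_betw_def)
  have uinj: "u k = u l \<Longrightarrow> k = l" for k l using u by (auto simp: bij_betw_def inj_def)
  define U0 :: "real^'n^'m" where "U0 = (\<chi> i k. u k $ i)"
  have inner_u: "(\<Sum>i\<in>UNIV. u k $ i * u l $ i) = (if k = l then 1 else 0)" for k l
  proof -
    have "(\<Sum>i\<in>UNIV. u k $ i * u l $ i) = u k \<bullet> u l" by (simp add: inner_vec_def)
    also have "\<dots> = (if k = l then 1 else 0)"
    proof (cases "k = l")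
      case True then show ?thesis using Bnorm[OF uB[of k]] by (simp add: norm_eq_1)
    next
      case False
      then have "u k \<noteq> u l" using uinj by blast
      then show ?thesis using Borth uB[of k] uB[of l] False by (simp add: pairwise_def orthogonal_def)
    qed
    finally show ?thesis .
  qed
  have UU: "transpose U0 ** U0 = mat 1"
    by (simp add: U0_def transpose_def matrix_matrix_mult_def mat_def vec_eq_iff inner_u)
  have usum: "(\<Sum>j\<in>UNIV. u k $ j) = 0" for k
  proof -
    have "u k \<in> S" using uB BS by blast
    then show ?thesis by (simp add: S_def one_def inner_vec_def)
  qed
  have CU: "centering ** U0 = U0"
  proof -
    have "(\<Sum>j\<in>UNIV. ((if i = j then 1 else 0) - 1 / real CARD('m)) * u k $ j) = u k $ i" for i k
    proof -
      have "(\<Sum>j\<in>UNIV. ((if i = j then 1 else 0) - 1 / real CARD('m)) * u k $ j)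
          = (\<Sum>j\<in>UNIV. (if i = j then u k $ j else 0)) - (1 / real CARD('m)) * (\<Sum>j\<in>UNIV. u k $ j)"
        by (simp add: left_diff_distrib sum_subtractf sum_distrib_left if_distrib[of "\<lambda>x. x * _"] cong: if_cong)
      also have "\<dots> = u k $ i" by (simp add: usum)
      finally show ?thesis .
    qed
    then show ?thesis
      by (simp add: centering_def U0_def matrix_matrix_mult_def mat_def vec_eq_iff)
  qed
  obtain b :: "'n \<Rightarrow> 'p" where binj: "inj b"
  proof -
    have "card (UNIV::'n set) \<le> card (UNIV::'p set)" using dp by simp
    then obtain f :: "'n \<Rightarrow> 'p" where "inj_on f UNIV"
      using card_le_inj[OF finite_class.finite_UNIV finite_class.finite_UNIV] by blast
    then show ?thesis using that by simp
  qed
  define V0 :: "real^'n^'p" where "V0 = (\<chi> i k. if i = b k then 1 else 0)"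
  have VV: "transpose V0 ** V0 = mat 1"
  proof -
    have "(\<Sum>i\<in>UNIV. (if i = b k then 1 else 0) * (if i = b l then 1 else 0)) = (if k = l then 1 else (0::real))" for k l
      using binj by (auto simp: if_distrib[of "\<lambda>x. x * _"] inj_def cong: if_cong)
    then show ?thesis by (simp add: V0_def transpose_def matrix_matrix_mult_def mat_def vec_eq_iff)
  qed
  define sv where "sv = (\<lambda>k. real (r k) + 1)"
  define X0 where "X0 = U0 ** dg sv ** transpose V0"
  have CX: "centering ** X0 = X0" unfolding X0_def by (simp add: matrix_mul_assoc CU)
  have XtX: "transpose X0 ** X0 = V0 ** dg (\<lambda>k. (sv k)^2) ** transpose V0"
  proof -
    have "transpose X0 = V0 ** dg sv ** transpose U0"
      unfolding X0_def by (simp add: matrix_transpose_mul matrix_mul_assoc)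
    then have "transpose X0 ** X0 = V0 ** dg sv ** (transpose U0 ** U0) ** dg sv ** transpose V0"
      unfolding X0_def by (simp add: matrix_mul_assoc)
    also have "\<dots> = V0 ** (dg sv ** dg sv) ** transpose V0" by (simp add: UU matrix_mul_assoc)
    also have "dg sv ** dg sv = dg (\<lambda>k. (sv k)^2)" by (simp add: dg_mult power2_eq_square)
    finally show ?thesis .
  qed
  have "qf r X0 = det (hsum (\<lambda>k. (sv k)^2) r)"
    unfolding qf_def gram_def CX XtX hank_decomp[OF VV] ..
  moreover have "det (hsum (\<lambda>k. (sv k)^2) r) \<noteq> 0"
  proof (rule det_hsum_nz[OF _ _ r])
    have rinj: "inj r" using r by (simp add: bij_betw_def)
    show "inj (\<lambda>k. (sv k)^2)"
    proof (rule injI)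
      fix a b assume "(sv a)^2 = (sv b)^2"
      then have "sv a = sv b" by (simp add: sv_def power2_eq_iff_nonneg)
      then show "a = b" using rinj by (simp add: sv_def inj_def)
    qed
    show "(sv k)^2 \<noteq> 0" for k by (simp add: sv_def)
  qed
  ultimately show ?thesis by (intro exI[of _ X0]) simp
qed

theorem proposition2:
  fixes mu :: "real^'p"
    and Theta P D :: "real^'p^'p"
    and H :: "real^('n::{finite,linorder})^('n::{finite,linorder}) \<Rightarrow> real^('n::{finite,linorder})^('n::{finite,linorder})"
    and Uf :: "real^'p^'m \<Rightarrow> real^('n::{finite,linorder})^'m"
    and Lf :: "real^'p^'m \<Rightarrow> real^('n::{finite,linorder})^('n::{finite,linorder})"
    and Vf :: "real^'p^'m \<Rightarrow> real^('n::{finite,linorder})^'p"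
  assumes dims: "CARD('m) = CARD('n) + 1" "CARD('p) > CARD('n)"
    and spd: "spd_mat Theta"
    and eig: "orthogonal_matrix P" "diag_mat D" "Theta = P ** (D ** D) ** transpose P"
    and H_diag: "\<And>A. diag_mat A \<Longrightarrow> diag_mat (H A)"
    and svd: "\<And>X. is_svd (centering ** X) (Uf X) (Lf X) (Vf X)"
    and integrable:
      "integrable (gauss_rows mu Theta)
         (\<lambda>X. (1 / real CARD('n)) *\<^sub>R (Vf X ** H (Lf X ** Lf X) ** transpose (Vf X)))"
  shows "\<exists>C. diag_mat C \<and>
           integral\<^sup>L (gauss_rows mu Theta)
             (\<lambda>X. (1 / real CARD('n)) *\<^sub>R (Vf X ** H (Lf X ** Lf X) ** transpose (Vf X)))
           = P ** C ** transpose P"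
proof -
  define F where "F = (\<lambda>X::real^'p^'m. (1 / real CARD('n)) *\<^sub>R (Vf X ** H (Lf X ** Lf X) ** transpose (Vf X)))"
  define g where "g = (\<lambda>X::real^'p^'m. \<Prod>i\<in>UNIV. mvn_density mu Theta (X $ i))"
  define \<mu> where "\<mu> = (gauss_rows mu Theta :: (real^'p^'m) measure)"
  define N where "N = matrix_inv Theta"
  have inv: "invertible Theta"
  proof -
    have "\<forall>x. Theta *v x = 0 \<longrightarrow> x = 0"
    proof (intro allI impI)
      fix x assume "Theta *v x = 0"
      then have "x \<bullet> (Theta *v x) = 0" by simp
      then show "x = 0" using spd unfolding spd_mat_def by (metis less_irrefl)
    qed
    then obtain B where "B ** Theta = mat 1" using matrix_left_invertible_ker by blast
    then show ?thesis using matrix_left_right_inverse unfolding invertible_def by blast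
  qed
  have ThN: "Theta ** N = mat 1 \<and> N ** Theta = mat 1"
    unfolding N_def matrix_inv_def using inv unfolding invertible_def by (rule someI_ex)
  have Po: "transpose P ** P = mat 1" "P ** transpose P = mat 1"
    using eig(1) by (auto simp: orthogonal_matrix_def)
  define dd where "dd = (\<lambda>k. D$k$k)"
  have Dd: "D = dg dd" unfolding dd_def by (rule diag_dg[OF eig(2)])
  have Th: "Theta = P ** dg (\<lambda>k. dd k * dd k) ** transpose P"
    using eig(3) by (simp add: Dd dg_mult)
  have detTh: "det Theta \<ge> 0"
  proof -
    have "det Theta = det P * prod (\<lambda>k. dd k * dd k) UNIV * det P"
      by (simp add: Th det_mul det_diagonal)
    also have "\<dots> = (det P)^2 * prod (\<lambda>k. dd k * dd k) UNIV" by (simp add: power2_eq_square)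
    finally show ?thesis by (simp add: prod_nonneg)
  qed
  have mvn_nn: "mvn_density mu Theta x \<ge> 0" for x
    unfolding mvn_density_def using detTh by (intro divide_nonneg_nonneg) auto
  have gauss: "\<mu> = density lborel (\<lambda>X. ennreal (g X))"
    unfolding \<mu>_def gauss_rows_def g_def by (simp add: prod_ennreal mvn_nn)
  have [measurable]: "(\<lambda>x::real^'p. N *v x) \<in> borel_measurable borel"
    by (intro borel_measurable_continuous_onI matrix_vector_mult_linear_continuous_on)
  have m1[measurable]: "(\<lambda>x::real^'p^'m. x $ i) \<in> borel_measurable borel" for i
    by (intro borel_measurable_continuous_onI continuous_on_component continuous_on_id)
  have m3[measurable]: "(\<lambda>x::real^'p^'m. N *v (x $ i - mu)) \<in> borel_measurable borel" for i
  proof -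
    have "continuous_on UNIV (\<lambda>x::real^'p^'m. x $ i - mu)" by (intro continuous_intros)
    then have "continuous_on UNIV ((*v) N \<circ> (\<lambda>x::real^'p^'m. x $ i - mu))"
      by (rule continuous_on_compose) (rule matrix_vector_mult_linear_continuous_on)
    then show ?thesis by (intro borel_measurable_continuous_onI) (simp add: o_def)
  qed
  have gmeas[measurable]: "g \<in> borel_measurable borel"
    unfolding g_def mvn_density_def N_def[symmetric] by measurable
  have gnn: "g X \<ge> 0" for X unfolding g_def by (simp add: prod_nonneg mvn_nn)
  have Fint: "integrable \<mu> F" using integrable by (simp add: \<mu>_def F_def)
  have Fmeas[measurable]: "F \<in> borel_measurable borel"
  proof -
    have "F \<in> borel_measurable \<mu>" using Fint by (rule borel_measurable_integrable)
    moreover have "sets \<mu> = sets borel" by (simp add: gauss)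
    ultimately show ?thesis using measurable_cong_sets by blast
  qed
  obtain r0 where "bij_betw r0 {0..<card (UNIV::'n set)} (UNIV::'n set)"
    using ex_bij_betw_nat_finite[of "UNIV::'n set"] by auto
  then have r: "bij_betw (inv_into {0..<CARD('n)} r0) (UNIV::'n set) {..<CARD('n)}"
    using bij_betw_inv_into by (auto simp: atLeast0LessThan)
  define r where "r = inv_into {0..<CARD('n)} r0"
  have r: "bij_betw r (UNIV::'n set) {..<CARD('n)}" using r by (simp add: r_def)
  have ae: "AE X in lborel. qf r (X::real^'p^'m) \<noteq> 0"
  proof -
    obtain X0 :: "real^'p^'m" where "qf r X0 \<noteq> 0" using witness[OF dims r] by blast
    then have "{X::real^'p^'m. qf r X = 0} \<in> null_sets lborel"
      by (rule poly_zero_null[OF rpf_qf])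
    then show ?thesis by (rule AE_I') auto
  qed
  have key: "integral\<^sup>L \<mu> F = S ** integral\<^sup>L \<mu> F ** transpose S"
    if So: "transpose S ** S = mat 1" and SN: "transpose S ** N ** S = N" for S :: "real^'p^'p"
  proof -
    define c where "c = (\<chi> i::'m. mu - S *v mu)"
    define T where "T = (\<lambda>X::real^'p^'m. X ** transpose S + c)"
    have Tlb: "distr lborel borel T = lborel"
    proof -
      have "T = (\<lambda>X. c + X ** transpose S)" by (simp add: T_def fun_eq_iff add.commute)
      then show ?thesis
        using lborel_affine_isometry[OF rowmult_isometry(1)[OF So] rowmult_isometry(2)[OF So], of c]
        by simp
    qed
    have Tm[measurable]: "T \<in> borel_measurable borel"
    proof -
      have "linear (\<lambda>X::real^'p^'m. X ** transpose S)" by (rule rowmult_isometry(1)[OF So])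
      then have "continuous_on UNIV (\<lambda>X::real^'p^'m. X ** transpose S)"
        by (simp add: linear_continuous_on linear_conv_bounded_linear)
      then have "continuous_on UNIV T" unfolding T_def by (intro continuous_intros)
      then show ?thesis by (rule borel_measurable_continuous_onI)
    qed
    have gT: "g (T X) = g X" for X
    proof -
      have "T X $ i = mu + S *v (X $ i - mu)" for i
        by (simp add: T_def c_def rowmult_nth matrix_vector_right_distrib matrix_vector_mult_diff_distrib)
      then show ?thesis
        using mvn_invariant[of S Theta mu] SN by (simp add: g_def N_def)
    qed
    have FT: "F (T X) = S ** F X ** transpose S" if "qf r X \<noteq> 0" for X
    proof -
      have TX: "T X = X ** transpose S + (\<chi> i. mu - S *v mu)" by (simp add: T_def c_def)
      have E: "Lf (T X) = Lf X \<and> Vf (T X) ** H (Lf (T X) ** Lf (T X)) ** transpose (Vf (T X))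
           = S ** (Vf X ** H (Lf X ** Lf X) ** transpose (Vf X)) ** transpose S"
        unfolding TX by (rule equiv[where H=H and Uf=Uf and Lf=Lf and Vf=Vf and v="mu - S *v mu", OF H_diag svd So that])
      then have e: "Vf (T X) ** H (Lf (T X) ** Lf (T X)) ** transpose (Vf (T X))
           = S ** (Vf X ** H (Lf X ** Lf X) ** transpose (Vf X)) ** transpose S" by (rule conjunct2)
      show ?thesis
        unfolding F_def e by (simp add: scalar_matrix_assoc matrix_scalar_ac matrix_mul_assoc)
    qed
    have aeT: "AE X in \<mu>. F (T X) = S ** F X ** transpose S"
    proof -
      have "AE X in lborel. F (T X) = S ** F X ** transpose S"
        using ae by eventually_elim (rule FT)
      then show ?thesis unfolding gauss
        by (subst AE_density) (auto elim: AE_mp)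
    qed
    have bl: "bounded_linear (\<lambda>M::real^'p^'p. S ** M ** transpose S)"
    proof -
      have l1: "linear (\<lambda>M::real^'p^'p. S ** M)"
        by (rule linearI) (simp_all add: matrix_add_ldistrib matrix_scalar_ac scalar_matrix_assoc)
      have l2: "linear (\<lambda>M::real^'p^'p. M ** transpose S)" by (rule rowmult_isometry(1)[OF So])
      have "linear ((\<lambda>M::real^'p^'p. M ** transpose S) \<circ> (\<lambda>M::real^'p^'p. S ** M))"
        by (rule linear_compose[OF l1 l2])
      then have "linear (\<lambda>M::real^'p^'p. S ** M ** transpose S)" by (simp add: o_def)
      then show ?thesis by (simp add: linear_conv_bounded_linear)
    qed
    have "integral\<^sup>L \<mu> F = integral\<^sup>L lborel (\<lambda>X. g X *\<^sub>R F X)"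
      unfolding gauss by (rule integral_density) (auto simp: gnn)
    also have "\<dots> = integral\<^sup>L (distr lborel borel T) (\<lambda>X. g X *\<^sub>R F X)" by (simp add: Tlb)
    also have "\<dots> = integral\<^sup>L lborel (\<lambda>X. g (T X) *\<^sub>R F (T X))"
      by (rule integral_distr) measurable
    also have "\<dots> = integral\<^sup>L lborel (\<lambda>X. g X *\<^sub>R F (T X))" by (simp add: gT)
    also have "\<dots> = integral\<^sup>L \<mu> (\<lambda>X. F (T X))"
      unfolding gauss by (rule integral_density[symmetric]) (auto simp: gnn)
    also have "\<dots> = integral\<^sup>L \<mu> (\<lambda>X. S ** F X ** transpose S)"
    proof (rule integral_cong_AE)
      show "(\<lambda>X. F (T X)) \<in> borel_measurable \<mu>" unfolding gauss by measurable
      show "(\<lambda>X. S ** F X ** transpose S) \<in> borel_measurable \<mu>"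
      proof -
        have blm: "(\<lambda>M::real^'p^'p. S ** M ** transpose S) \<in> borel_measurable borel"
          by (intro borel_measurable_continuous_onI linear_continuous_on bl)
        show ?thesis using measurable_compose[OF borel_measurable_integrable[OF Fint] blm] by simp
      qed
      show "AE X in \<mu>. F (T X) = S ** F X ** transpose S" by (rule aeT)
    qed
    also have "\<dots> = S ** integral\<^sup>L \<mu> F ** transpose S"
      by (rule integral_bounded_linear[OF bl Fint])
    finally show ?thesis .
  qed
  define I where "I = integral\<^sup>L \<mu> F"
  define M where "M = transpose P ** I ** P"
  have Mflip: "M = dg e ** M ** dg e" if e2: "\<And>k. e k * e k = 1" for e
  proof -
    define S where "S = P ** dg e ** transpose P"
    have St: "transpose S = S" by (simp add: S_def matrix_transpose_mul matrix_mul_assoc)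
    have ee: "dg e ** dg e = mat 1" using e2 by (simp add: dg_mult dg_one)
    have SS: "transpose S ** S = mat 1"
    proof -
      have "transpose S ** S = P ** dg e ** (transpose P ** P) ** dg e ** transpose P"
        by (simp only: St, simp add: S_def matrix_mul_assoc)
      also have "\<dots> = P ** (dg e ** dg e) ** transpose P" by (simp add: Po matrix_mul_assoc)
      also have "\<dots> = mat 1" by (simp add: ee Po)
      finally show ?thesis .
    qed
    have SS': "S ** transpose S = mat 1" using SS St by simp
    have SThS: "transpose S ** Theta ** S = Theta"
    proof -
      have "transpose S ** Theta ** S
          = P ** dg e ** (transpose P ** P) ** dg (\<lambda>k. dd k * dd k) ** (transpose P ** P) ** dg e ** transpose P"
        by (simp only: St, simp add: S_def Th matrix_mul_assoc)
      also have "\<dots> = P ** (dg e ** dg (\<lambda>k. dd k * dd k) ** dg e) ** transpose P"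
        by (simp add: Po matrix_mul_assoc)
      also have "dg e ** dg (\<lambda>k. dd k * dd k) ** dg e = dg (\<lambda>k. dd k * dd k)"
      proof -
        have "(\<lambda>k. e k * (dd k * dd k) * e k) = (\<lambda>k. dd k * dd k)"
          using e2 by (auto simp: fun_eq_iff mult_ac)
        then show ?thesis by (simp add: dg_mult)
      qed
      finally show ?thesis using Th by simp
    qed
    have SN: "transpose S ** N ** S = N"
    proof -
      have "transpose S ** N ** S = transpose S ** N ** S ** (Theta ** N)" using ThN by simp
      also have "\<dots> = transpose S ** N ** S ** (transpose S ** Theta ** S) ** N"
        by (simp add: SThS matrix_mul_assoc)
      also have "\<dots> = transpose S ** N ** (S ** transpose S) ** Theta ** S ** N"
        by (simp add: matrix_mul_assoc)
      also have "\<dots> = transpose S ** (N ** Theta) ** S ** N" by (simp add: SS' matrix_mul_assoc)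
      also have "\<dots> = N" using ThN SS by (simp add: matrix_mul_assoc)
      finally show ?thesis .
    qed
    have IS: "I = S ** I ** transpose S" unfolding I_def by (rule key[OF SS SN])
    have PS: "transpose P ** S = dg e ** transpose P"
      by (simp add: S_def matrix_mul_assoc Po)
    have SP: "transpose S ** P = P ** dg e"
      by (simp only: St, simp add: S_def matrix_mul_assoc[symmetric] Po)
    have "M = transpose P ** (S ** I ** transpose S) ** P" unfolding M_def using IS by simp
    also have "\<dots> = (transpose P ** S) ** I ** (transpose S ** P)" by (simp add: matrix_mul_assoc)
    also have "\<dots> = dg e ** M ** dg e" by (simp add: PS SP M_def matrix_mul_assoc)
    finally show ?thesis .
  qed
  have diagM: "diag_mat M"
    unfolding diag_mat_def
  proof (intro allI impI)
    fix i j :: 'p assume ij: "i \<noteq> j"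
    define e where "e = (\<lambda>k. if k = i then -1 else (1::real))"
    have "\<And>k. e k * e k = 1" by (simp add: e_def)
    then have "M $ i $ j = (dg e ** M ** dg e) $ i $ j" using Mflip by metis
    also have "\<dots> = e i * M $ i $ j * e j" by (simp add: dg_left_nth dg_right_nth)
    also have "\<dots> = - M $ i $ j" using ij by (simp add: e_def)
    finally show "M $ i $ j = 0" by simp
  qed
  have PMP: "P ** M ** transpose P = I"
  proof -
    have "P ** M ** transpose P = (P ** transpose P) ** I ** (P ** transpose P)"
      by (simp add: M_def matrix_mul_assoc)
    then show ?thesis by (simp add: Po)
  qed
  show ?thesis
    using diagM PMP by (intro exI[of _ M]) (simp add: I_def \<mu>_def F_def)
qed

end
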